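(* Let $X$ and $Y$ be shift spaces with $Y$ irreducible. If $\phi : X \to Y$ is an open code, then $\phi$ is onto.
   Context: Shift spaces are closed shift-invariant subsets of $\mathcal{A}^{\mathbb{Z}}$ ($\mathcal{A}$ finite, with the shift $\sigma(x)_i=x_{i+1}$); a code is a continuous shift-commuting map. $Y$ is irreducible if for all words $u,v$ occurring in $Y$ there is $w$ with $uwv$ occurring in $Y$. Open: images of open sets are open. *)

theory Defs
  imports "HOL-Analysis.Analysis"
begin

definition full_shift_top :: "(int \<Rightarrow> 'a::finite) topology" where
  "full_shift_top = product_topology (\<lambda>_. discrete_topology UNIV) UNIV"

definition shift :: "(int \<Rightarrow> 'a) \<Rightarrow> (int \<Rightarrow> 'a)" where
  "shift x = (\<lambda>i. x (i + 1))"

definition shift_space :: "(int \<Rightarrow> 'a::finite) set \<Rightarrow> bool" where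
  "shift_space X \<longleftrightarrow> closedin full_shift_top X \<and> shift ` X = X"

definition code :: "(int \<Rightarrow> 'a::finite) set \<Rightarrow> (int \<Rightarrow> 'b::finite) set
                     \<Rightarrow> ((int \<Rightarrow> 'a) \<Rightarrow> (int \<Rightarrow> 'b)) \<Rightarrow> bool" where
  "code X Y \<phi> \<longleftrightarrow> \<phi> ` X \<subseteq> Y
     \<and> continuous_map (subtopology full_shift_top X) (subtopology full_shift_top Y) \<phi>
     \<and> (\<forall>x\<in>X. \<phi> (shift x) = shift (\<phi> x))"

definition occurs_in :: "'a list \<Rightarrow> (int \<Rightarrow> 'a) set \<Rightarrow> bool" where
  "occurs_in u Y \<longleftrightarrow> (\<exists>y\<in>Y. \<exists>i::int. \<forall>k<length u. y (i + int k) = u ! k)"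

definition irreducible_shift :: "(int \<Rightarrow> 'a::finite) set \<Rightarrow> bool" where
  "irreducible_shift Y \<longleftrightarrow>
     (\<forall>u v. occurs_in u Y \<and> occurs_in v Y \<longrightarrow> (\<exists>w. occurs_in (u @ w @ v) Y))"

end

theory Submission
  imports Defs
begin

lemma topspace_fs[simp]: "topspace (full_shift_top :: (int \<Rightarrow> 'a::finite) topology) = UNIV"
  by (simp add: full_shift_top_def)

lemma cyl:
  fixes U :: "(int \<Rightarrow> 'a::finite) set"
  assumes "openin full_shift_top U" "z \<in> U"
  shows "\<exists>n::nat. \<forall>w. (\<forall>j. - int n \<le> j \<and> j \<le> int n \<longrightarrow> w j = z j) \<longrightarrow> w \<in> U"
proof -
  obtain V where fin: "finite {i. V i \<noteq> UNIV}" and zV: "z \<in> Pi\<^sub>E UNIV V" and sub: "Pi\<^sub>E UNIV V \<subseteq> U"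
    using assms unfolding full_shift_top_def openin_product_topology_alt by force
  define F where "F = {i. V i \<noteq> UNIV}"
  define n where "n = (\<Sum>i\<in>F. nat \<bar>i\<bar>)"
  have bnd: "\<bar>i\<bar> \<le> int n" if "i \<in> F" for i
  proof -
    have "nat \<bar>i\<bar> \<le> n" unfolding n_def
      using fin that F_def by (intro member_le_sum) auto
    thus ?thesis by linarith
  qed
  show ?thesis
  proof (intro exI allI impI)
    fix w assume h: "\<forall>j. - int n \<le> j \<and> j \<le> int n \<longrightarrow> w j = z j"
    have "w \<in> Pi\<^sub>E UNIV V"
    proof (simp add: PiE_def Pi_def, intro allI)
      fix i
      show "w i \<in> V i"
      proof (cases "i \<in> F")
        case True
        then have "w i = z i" using h bnd[OF True] by (metis abs_le_D1 abs_le_D2 minus_le_iff)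
        thus ?thesis using zV by auto
      next
        case False thus ?thesis by (auto simp: F_def)
      qed
    qed
    thus "w \<in> U" using sub by auto
  qed
qed

definition sh :: "int \<Rightarrow> (int \<Rightarrow> 'a) \<Rightarrow> (int \<Rightarrow> 'a)" where
  "sh j x = (\<lambda>i. x (i + j))"

lemma sh_inv: "shift ` S = S \<Longrightarrow> x \<in> S \<Longrightarrow> sh (-1) x \<in> S \<and> shift (sh (-1) x) = x"
proof -
  assume a: "shift ` S = S" "x \<in> S"
  then obtain x' where x': "x' \<in> S" "x = shift x'" by (metis imageE)
  have "sh (-1) x = x'" using x' by (auto simp: sh_def shift_def)
  thus ?thesis using x' by simp
qed

lemma sh_equiv:
  fixes X :: "(int \<Rightarrow> 'a) set"
  assumes SX: "shift ` X = X" and eq: "\<forall>x\<in>X. \<phi> (shift x) = shift (\<phi> x)"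
  shows "\<forall>x\<in>X. sh j x \<in> X \<and> \<phi> (sh j x) = sh j (\<phi> x)"
proof (induct j rule: int_induct[where k=0])
  case base
  then show ?case by (simp add: sh_def)
next
  case (step1 i)
  have e: "sh (i+1) y = shift (sh i y)" for y :: "int \<Rightarrow> 'c"
    by (auto simp: sh_def shift_def add_ac)
  show ?case
  proof
    fix x assume "x \<in> X"
    with step1 have a: "sh i x \<in> X" "\<phi> (sh i x) = sh i (\<phi> x)" by auto
    have "shift (sh i x) \<in> X" using a SX by blast
    thus "sh (i + 1) x \<in> X \<and> \<phi> (sh (i + 1) x) = sh (i + 1) (\<phi> x)"
      using a eq by (simp add: e)
  qed
next
  case (step2 i)
  have e: "sh (i-1) y = sh (-1) (sh i y)" for y :: "int \<Rightarrow> 'c"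
    by (auto simp: sh_def algebra_simps)
  show ?case
  proof
    fix x assume "x \<in> X"
    with step2 have a: "sh i x \<in> X" "\<phi> (sh i x) = sh i (\<phi> x)" by auto
    from sh_inv[OF SX a(1)] have b: "sh (-1) (sh i x) \<in> X" "shift (sh (-1) (sh i x)) = sh i x" by auto
    have "\<phi> (sh i x) = shift (\<phi> (sh (-1) (sh i x)))" using eq b by metis
    hence "sh (-1) (\<phi> (sh i x)) = \<phi> (sh (-1) (sh i x))" by (auto simp: sh_def shift_def)
    thus "sh (i - 1) x \<in> X \<and> \<phi> (sh (i - 1) x) = sh (i - 1) (\<phi> x)"
      using a b by (simp add: e)
  qed
qed

lemma sh_closed:
  assumes "shift ` S = S" "x \<in> S" shows "sh j x \<in> S"
  using sh_equiv[OF assms(1), of id] assms(2) by (auto simp: shift_def)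

theorem lemma2p1:
  fixes X :: "(int \<Rightarrow> 'a::finite) set" and Y :: "(int \<Rightarrow> 'b::finite) set"
    and \<phi> :: "(int \<Rightarrow> 'a) \<Rightarrow> (int \<Rightarrow> 'b)"
  assumes "shift_space X" and "X \<noteq> {}"
    and "shift_space Y" and "irreducible_shift Y"
    and "code X Y \<phi>"
    and "open_map (subtopology full_shift_top X) (subtopology full_shift_top Y) \<phi>"
  shows "\<phi> ` X = Y"
proof -
  have SX: "shift ` X = X" and cX: "closedin full_shift_top X" using assms(1) by (auto simp: shift_space_def)
  have SY: "shift ` Y = Y" using assms(3) by (auto simp: shift_space_def)
  have PY: "\<phi> ` X \<subseteq> Y" and cont: "continuous_map (subtopology full_shift_top X) (subtopology full_shift_top Y) \<phi>"
    and eq: "\<forall>x\<in>X. \<phi> (shift x) = shift (\<phi> x)" using assms(5) by (auto simp: code_def)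
  define P where "P = \<phi> ` X"
  have cs: "compact_space (full_shift_top :: (int \<Rightarrow> 'a) topology)"
    unfolding full_shift_top_def compact_space_product_topology compact_space_discrete_topology by simp
  have hs: "Hausdorff_space (full_shift_top :: (int \<Rightarrow> 'b) topology)"
    unfolding full_shift_top_def by (simp add: Hausdorff_space_product_topology)
  have "compactin full_shift_top X" using closedin_compact_space[OF cs cX] .
  hence "compactin (subtopology full_shift_top X) X" by (simp add: compactin_subtopology)
  hence "compactin (subtopology full_shift_top Y) P" unfolding P_def using cont image_compactin by blast
  hence "compactin full_shift_top P" by (simp add: compactin_subtopology)
  hence clP: "closedin full_shift_top P" using compactin_imp_closedin[OF hs] by blast
  have "openin (subtopology full_shift_top X) X"
    by (metis openin_topspace topspace_subtopology_subset topspace_fs subset_UNIV)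
  hence "openin (subtopology full_shift_top Y) P" using assms(6) unfolding open_map_def P_def by blast
  then obtain T where oT: "openin full_shift_top T" and PT: "P = T \<inter> Y" by (auto simp: openin_subtopology)
  have Pinv: "sh j p \<in> P" if pP: "p \<in> P" for j p
  proof -
    obtain x where x: "x \<in> X" "p = \<phi> x" using pP unfolding P_def by auto
    have "sh j x \<in> X \<and> \<phi> (sh j x) = sh j (\<phi> x)" using sh_equiv[OF SX eq] x by blast
    thus ?thesis using x P_def by (metis image_eqI)
  qed
  have "Y \<subseteq> P"
  proof
    fix y assume yY: "y \<in> Y"
    show "y \<in> P"
    proof (rule ccontr)
      assume nP: "y \<notin> P"
      have "openin full_shift_top (- P)" using clP by (simp add: closedin_def Compl_eq_Diff_UNIV)
      then obtain m :: nat where hm: "\<And>w. (\<forall>j. - int m \<le> j \<and> j \<le> int m \<longrightarrow> w j = y j) \<Longrightarrow> w \<in> - P"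
        using cyl nP by (metis ComplI)
      obtain z where zP: "z \<in> P" using assms(2) P_def by auto
      hence zT: "z \<in> T" and zY: "z \<in> Y" using PT by auto
      obtain n :: nat where hn: "\<And>w. (\<forall>j. - int n \<le> j \<and> j \<le> int n \<longrightarrow> w j = z j) \<Longrightarrow> w \<in> T"
        using cyl[OF oT zT] by metis
      define u where "u = map (\<lambda>k. z (- int n + int k)) [0..<2*n+1]"
      define v where "v = map (\<lambda>k. y (- int m + int k)) [0..<2*m+1]"
      have "occurs_in u Y" unfolding occurs_in_def u_def using zY by (intro bexI[of _ z] exI[of _ "- int n"]) (auto simp del: upt_Suc)
      moreover have "occurs_in v Y" unfolding occurs_in_def v_def using yY by (intro bexI[of _ y] exI[of _ "- int m"]) (auto simp del: upt_Suc)
      ultimately obtain w where "occurs_in (v @ w @ u) Y" using assms(4) unfolding irreducible_shift_def by blast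
      then obtain y' i where y'Y: "y' \<in> Y" and hy': "\<And>k. k < length (v @ w @ u) \<Longrightarrow> y' (i + int k) = (v @ w @ u) ! k"
        unfolding occurs_in_def by blast
      define L where "L = 2*m+1+length w"
      define a where "a = i + int L + int n"
      have "sh a y' \<in> T"
      proof (rule hn, intro allI impI)
        fix j assume j: "- int n \<le> j \<and> j \<le> int n"
        define k where "k = nat (j + int n)"
        have k: "k < 2*n+1" "j = - int n + int k" using j unfolding k_def by auto
        have "y' (i + int (L + k)) = (v @ w @ u) ! (L + k)" proof (rule hy')
          show "L + k < length (v @ w @ u)" using k by (simp add: u_def v_def L_def del: upt_Suc)
        qed
        also have "\<dots> = u ! k" by (simp add: L_def v_def nth_append del: upt_Suc)
        also have "\<dots> = z j" using k by (simp add: u_def del: upt_Suc)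
        finally have e: "y' (i + int (L + k)) = z j" .
        have h2: "j + a = i + int (L + k)" using k unfolding a_def by simp
        show "sh a y' j = z j" unfolding sh_def using e h2 by metis
      qed
      moreover have "sh a y' \<in> Y" using sh_closed[OF SY y'Y] .
      ultimately have "sh a y' \<in> P" using PT by auto
      hence "sh (-a) (sh a y') \<in> P" by (rule Pinv)
      hence "y' \<in> P" by (simp add: sh_def)
      hence "sh (i + int m) y' \<in> P" by (rule Pinv)
      moreover have "sh (i + int m) y' \<in> - P"
      proof (rule hm, intro allI impI)
        fix j assume j: "- int m \<le> j \<and> j \<le> int m"
        define k where "k = nat (j + int m)"
        have k: "k < 2*m+1" "j = - int m + int k" using j unfolding k_def by auto
        have "y' (i + int k) = (v @ w @ u) ! k" proof (rule hy')
          show "k < length (v @ w @ u)" using k by (simp add: u_def v_def del: upt_Suc)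
        qed
        also have "\<dots> = v ! k" using k by (simp add: v_def nth_append del: upt_Suc)
        also have "\<dots> = y j" using k by (simp add: v_def del: upt_Suc)
        finally have e: "y' (i + int k) = y j" .
        have h2: "j + (i + int m) = i + int k" using k by simp
        show "sh (i + int m) y' j = y j" unfolding sh_def using e h2 by metis
      qed
      ultimately show False by auto
    qed
  qed
  thus ?thesis using PY P_def by auto
qed

end
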